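(* Let $\mathcal{P}=\{1,\dots,p\}$, let $M(1),\dots,M(p)\in\mathbb{R}^{n\times n}$ be exponentially stable (Hurwitz) matrices, and let $N\in\mathbb{R}^{n\times n}$ be a fixed matrix. Let $\tau_D>0$, $N_0>0$ and $\lambda>0$. Then there exists $g_0>0$ such that for every $g\ge g_0$ there is a constant $c>0$ such that, for every switching signal $\sigma\in\mathcal{S}_{ave}(\tau_D,N_0)$ and every initial condition, the solution of $\dot x=\big(N+gM(\sigma(t))\big)x$ satisfies $\|x(t)\|\le c\,e^{-\lambda t}\|x(0)\|$ for all $t\ge0$.
   Context: A switching signal is a piecewise-constant, right-continuous map $\sigma:[0,\infty)\to\mathcal{P}$ with finitely many discontinuities on each bounded interval. For $t\ge t_0\ge0$, $N_\sigma(t_0,t)$ is the number of discontinuities of $\sigma$ in the open interval $(t_0,t)$, and $\mathcal{S}_{ave}(\tau_D,N_0)$ is the set of switching signals with $N_\sigma(t_0,t)\le N_0+\frac{t-t_0}{\tau_D}$ for all $t\ge t_0\ge0$. $\|\cdot\|$ is any vector norm (with induced matrix norm). *)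

theory Defs
  imports "HOL-Analysis.Analysis"
begin

definition hurwitz :: "real^'n^'n \<Rightarrow> bool" where
  "hurwitz A \<longleftrightarrow>
     (\<forall>(\<mu>::complex) (v::complex^'n). v \<noteq> 0 \<and>
        (\<chi> i j. complex_of_real (A$i$j)) *v v = \<mu> *s v \<longrightarrow> Re \<mu> < 0)"

definition disc_pts :: "(real \<Rightarrow> nat) \<Rightarrow> real set" where
  "disc_pts \<sigma> = {t. 0 \<le> t \<and> \<not> continuous (at t within {0..}) \<sigma>}"

definition switching_signal :: "nat set \<Rightarrow> (real \<Rightarrow> nat) \<Rightarrow> bool" where
  "switching_signal P \<sigma> \<longleftrightarrow>
     (\<forall>t\<ge>0. \<sigma> t \<in> P) \<and>
     (\<forall>t\<ge>0. \<exists>\<epsilon>>0. \<forall>s\<in>{t..<t+\<epsilon>}. \<sigma> s = \<sigma> t) \<and>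
     (\<forall>T. finite (disc_pts \<sigma> \<inter> {0..T}))"

definition N_sigma :: "(real \<Rightarrow> nat) \<Rightarrow> real \<Rightarrow> real \<Rightarrow> nat" where
  "N_sigma \<sigma> t0 t = card (disc_pts \<sigma> \<inter> {t0<..<t})"

definition S_ave :: "nat set \<Rightarrow> real \<Rightarrow> real \<Rightarrow> (real \<Rightarrow> nat) set" where
  "S_ave P \<tau>D N0 = {\<sigma>. switching_signal P \<sigma> \<and>
      (\<forall>t0 t. 0 \<le> t0 \<and> t0 \<le> t \<longrightarrow> real (N_sigma \<sigma> t0 t) \<le> N0 + (t - t0) / \<tau>D)}"

definition switched_solution ::
  "(nat \<Rightarrow> real^'n^'n) \<Rightarrow> (real \<Rightarrow> nat) \<Rightarrow> (real \<Rightarrow> real^'n) \<Rightarrow> bool" where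
  "switched_solution A \<sigma> x \<longleftrightarrow>
     continuous_on {0..} x \<and>
     (\<forall>t. 0 \<le> t \<and> t \<notin> disc_pts \<sigma> \<longrightarrow>
        (x has_vector_derivative (A (\<sigma> t) *v x t)) (at t within {0..}))"

end

theory Submission
  imports Defs "Jordan_Normal_Form.Schur_Decomposition"
begin

no_notation Matrix.vec_index (infixl \<open>$\<close> 100)


definition fm :: "('n \<Rightarrow> nat) \<Rightarrow> complex mat \<Rightarrow> complex^'n^'n" where
  "fm h B = (\<chi> i j. B $$ (h i, h j))"
definition tm :: "('n \<Rightarrow> nat) \<Rightarrow> complex^'n^'n \<Rightarrow> complex mat" where
  "tm h A = Matrix.mat CARD('n) CARD('n) (\<lambda>(i,j). A $ (inv_into UNIV h i) $ (inv_into UNIV h j))"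
definition fv :: "('n \<Rightarrow> nat) \<Rightarrow> complex Matrix.vec \<Rightarrow> complex^'n" where
  "fv h v = (\<chi> i. Matrix.vec_index v (h i))"

lemma bij_sum_reindex:
  fixes h :: "'n::finite \<Rightarrow> nat"
  assumes "bij_betw h UNIV {0..<CARD('n)}"
  shows "(\<Sum>j<CARD('n). f j) = (\<Sum>l\<in>UNIV. f (h l))"
proof -
  have "(\<Sum>l\<in>UNIV. f (h l)) = (\<Sum>j\<in>{0..<CARD('n)}. f j)"
    using sum.reindex_bij_betw[OF assms, of f] .
  then show ?thesis by (simp add: atLeast0LessThan)
qed

lemma fm_tm:
  assumes "bij_betw h UNIV {0..<CARD('n::finite)}"
  shows "fm h (tm h A) = (A::complex^'n^'n)"
proof -
  have inj: "inj h" using assms bij_betw_def by blast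
  have lt: "h i < CARD('n)" for i using assms bij_betwE by fastforce
  show ?thesis unfolding fm_def tm_def
    by (simp add: vec_eq_iff lt inv_f_f[OF inj])
qed

lemma tm_carrier: "tm h (A::complex^'n^'n) \<in> carrier_mat CARD('n::finite) CARD('n)"
  unfolding tm_def by simp

lemma fm_mult:
  assumes h: "bij_betw h UNIV {0..<CARD('n::finite)}"
    and B: "B \<in> carrier_mat CARD('n) CARD('n)" and C: "C \<in> carrier_mat CARD('n) CARD('n)"
  shows "fm h (B * C) = (fm h B ** fm h C :: complex^'n^'n)"
proof -
  have lt: "h i < CARD('n)" for i using h bij_betwE by fastforce
  show ?thesis
    unfolding fm_def matrix_matrix_mult_def
    using B C
    by (simp add: vec_eq_iff lt scalar_prod_def bij_sum_reindex[OF h] atLeast0LessThan)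
qed

lemma fm_one:
  assumes h: "bij_betw h UNIV {0..<CARD('n::finite)}"
  shows "fm h (1\<^sub>m CARD('n)) = (Finite_Cartesian_Product.mat 1 :: complex^'n^'n)"
proof -
  have inj: "inj h" using h bij_betw_def by blast
  have lt: "h i < CARD('n)" for i using h bij_betwE by fastforce
  show ?thesis unfolding fm_def by (auto simp: vec_eq_iff lt Finite_Cartesian_Product.mat_def inj_eq[OF inj])
qed

lemma fv_mult:
  assumes h: "bij_betw h UNIV {0..<CARD('n::finite)}"
    and B: "B \<in> carrier_mat CARD('n) CARD('n)" and v: "v \<in> carrier_vec CARD('n)"
  shows "fv h (B *\<^sub>v v) = (fm h B *v fv h v :: complex^'n)"
proof -
  have lt: "h i < CARD('n)" for i using h bij_betwE by fastforce
  show ?thesis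
    unfolding fm_def fv_def matrix_vector_mult_def
    using B v
    by (simp add: vec_eq_iff lt scalar_prod_def bij_sum_reindex[OF h] atLeast0LessThan)
qed

lemma fv_smult:
  assumes h: "bij_betw h UNIV {0..<CARD('n::finite)}" and v: "v \<in> carrier_vec CARD('n)"
  shows "fv h (e \<cdot>\<^sub>v v) = e *s (fv h v :: complex^'n)"
proof -
  have lt: "h i < CARD('n)" for i using h bij_betwE by fastforce
  show ?thesis unfolding fv_def vector_scalar_mult_def using v by (simp add: lt)
qed

lemma fv_nz:
  assumes h: "bij_betw h UNIV {0..<CARD('n::finite)}" and v: "v \<in> carrier_vec CARD('n)"
    and nz: "v \<noteq> 0\<^sub>v CARD('n)"
  shows "(fv h v :: complex^'n) \<noteq> 0"
proof
  assume z: "(fv h v :: complex^'n) = 0"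
  have "v = 0\<^sub>v CARD('n)"
  proof (rule eq_vecI)
    fix k assume k: "k < dim_vec (0\<^sub>v CARD('n) :: complex Matrix.vec)"
    then have "k \<in> {0..<CARD('n)}" by simp
    then obtain l where l: "h l = k" using h by (metis bij_betw_def imageE)
    have "(fv h v :: complex^'n) $ l = 0" using z by simp
    then show "Matrix.vec_index v k = Matrix.vec_index (0\<^sub>v CARD('n)) k" using l k unfolding fv_def by simp
  qed (use v in simp)
  then show False using nz by simp
qed

lemma triangularize:
  fixes A :: "complex^'n::finite^'n"
  shows "\<exists>h::'n\<Rightarrow>nat. inj h \<and> (\<exists>P Q T. P ** Q = Finite_Cartesian_Product.mat 1 \<and>
     Q ** P = Finite_Cartesian_Product.mat 1 \<and> A = P ** T ** Q \<and>
     (\<forall>i j. h j < h i \<longrightarrow> T$i$j = 0) \<and>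
     (\<forall>i. \<exists>v. v \<noteq> 0 \<and> A *v v = (T$i$i) *s v))"
proof -
  obtain h :: "'n \<Rightarrow> nat" where h: "bij_betw h UNIV {0..<CARD('n)}"
    using ex_bij_betw_finite_nat[of "UNIV::'n set"] by auto
  have inj: "inj h" using h bij_betw_def by blast
  have lt: "h i < CARD('n)" for i using h bij_betwE by fastforce
  define n where "n = CARD('n)"
  define A' where "A' = tm h A"
  have A': "A' \<in> carrier_mat n n" unfolding A'_def n_def by (rule tm_carrier)
  obtain es where es: "char_poly A' = (\<Prod>a\<leftarrow>es. [:- a, 1:])"
    using char_poly_factorized[OF A'] by blast
  obtain B P Q where sd: "schur_decomposition A' es = (B,P,Q)"
    by (cases "schur_decomposition A' es") auto
  from schur_decomposition[OF A' es sd]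
  have sim: "similar_mat_wit A' B P Q" and ut: "upper_triangular B" and dg: "diag_mat B = es"
    by auto
  from similar_mat_witD2[OF A' sim] have B: "B \<in> carrier_mat n n" and P: "P \<in> carrier_mat n n"
    and Q: "Q \<in> carrier_mat n n" and PQ: "P * Q = 1\<^sub>m n" and QP: "Q * P = 1\<^sub>m n"
    and AB: "A' = P * B * Q" by auto
  have AA: "A = fm h A'" unfolding A'_def using fm_tm[OF h] by simp
  show ?thesis
  proof (rule exI[of _ h], rule conjI[OF inj], rule exI[of _ "fm h P"], rule exI[of _ "fm h Q"],
      rule exI[of _ "fm h B"], intro conjI allI impI)
    show "fm h P ** fm h Q = Finite_Cartesian_Product.mat 1"
      using fm_mult[OF h] P Q PQ fm_one[OF h] n_def by metis
    show "fm h Q ** fm h P = Finite_Cartesian_Product.mat 1"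
      using fm_mult[OF h] P Q QP fm_one[OF h] n_def by metis
    show "A = fm h P ** fm h B ** fm h Q"
      unfolding AA AB using fm_mult[OF h] P Q B n_def by (metis mult_carrier_mat)
    fix i j
    assume "h j < h i"
    then show "fm h B $ i $ j = 0" unfolding fm_def using ut B lt n_def by auto
  next
    fix i
    define e where "e = B $$ (h i, h i)"
    have "e \<in> set es" unfolding dg[symmetric] e_def diag_mat_def using B lt n_def by auto
    then have "poly (char_poly A') e = 0" unfolding es
      by (simp add: poly_prod_list prod_list_zero_iff)
    then have "eigenvalue A' e" using eigenvalue_root_char_poly[OF A'] by simp
    then obtain v where ev: "eigenvector A' v e" unfolding eigenvalue_def by blast
    then have v: "v \<in> carrier_vec n" and v0: "v \<noteq> 0\<^sub>v n" and Av: "A' *\<^sub>v v = e \<cdot>\<^sub>v v"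
      unfolding eigenvector_def using A' by auto
    show "\<exists>v. v \<noteq> 0 \<and> A *v v = (fm h B $ i $ i) *s v"
    proof (rule exI[of _ "fv h v"], intro conjI)
      show "fv h v \<noteq> 0" using fv_nz[OF h] v v0 n_def by simp
      have "A *v fv h v = fv h (A' *\<^sub>v v)" unfolding AA using fv_mult[OF h] A' v n_def by simp
      also have "\<dots> = e *s fv h v" unfolding Av using fv_smult[OF h] v n_def by simp
      finally show "A *v fv h v = (fm h B $ i $ i) *s fv h v" unfolding e_def fm_def by simp
    qed
  qed
qed



definition cmat :: "real^'n^'n \<Rightarrow> complex^'n^'n" where
  "cmat M = (\<chi> i j. complex_of_real (M$i$j))"

lemma inner_complex_mult_self: "inner (a::complex) (t * a) = Re t * (norm a)^2"
proof -
  have n: "(norm a)^2 = (Re a)^2 + (Im a)^2" by (rule cmod_power2)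
  show ?thesis by (simp only: n inner_complex_def) (simp add: power2_eq_square algebra_simps)
qed

lemma inner_complex_bound: "inner (a::complex) b \<le> norm a * norm b"
  by (simp add: norm_cauchy_schwarz)

lemma hurwitz_lyap:
  fixes M :: "real^'n::finite^'n"
  assumes hw: "hurwitz M"
  shows "\<exists>S Sinv :: complex^'n^'n. \<exists>\<alpha>>0. (\<forall>w. S *v (Sinv *v w) = w) \<and>
     (\<forall>y. inner y (Sinv *v (cmat M *v (S *v y))) \<le> - \<alpha> * (norm y)^2)"
proof -
  obtain h :: "'n \<Rightarrow> nat" and P Q T where inj: "inj h"
    and PQ: "P ** Q = Finite_Cartesian_Product.mat 1" and QP: "Q ** P = Finite_Cartesian_Product.mat 1" and MT: "cmat M = P ** T ** Q"
    and ut: "\<And>i j. h j < h i \<Longrightarrow> T$i$j = 0"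
    and ev: "\<And>i. \<exists>v. v \<noteq> 0 \<and> cmat M *v v = (T$i$i) *s v"
    using triangularize[of "cmat M"] by blast
  have neg: "Re (T$i$i) < 0" for i
    using ev[of i] hw unfolding hurwitz_def cmat_def by blast
  define \<alpha>0 where "\<alpha>0 = Min (range (\<lambda>i. - Re (T$i$i)))"
  have a0: "\<alpha>0 > 0" unfolding \<alpha>0_def using neg by (simp add: Min_gr_iff)
  have a0le: "\<alpha>0 \<le> - Re (T$i$i)" for i unfolding \<alpha>0_def by (rule Min_le) auto
  define C where "C = (\<Sum>i\<in>UNIV. \<Sum>j\<in>UNIV. norm (T$i$j))"
  have C0: "C \<ge> 0" unfolding C_def by (intro sum_nonneg) auto
  define \<epsilon> where "\<epsilon> = min 1 (\<alpha>0 / (2 * (C + 1)))"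
  have e0: "\<epsilon> > 0" and e1: "\<epsilon> \<le> 1" unfolding \<epsilon>_def using a0 C0 by auto
  have eC: "\<epsilon> * C \<le> \<alpha>0 / 2"
  proof -
    have "\<epsilon> * C \<le> \<alpha>0 / (2 * (C + 1)) * C" using C0 unfolding \<epsilon>_def
      by (intro mult_right_mono) auto
    also have "\<dots> \<le> \<alpha>0 / 2" using a0 C0 by (simp add: field_simps)
    finally show ?thesis .
  qed
  define D :: "complex^'n^'n" where "D = (\<chi> i j. if i = j then complex_of_real (\<epsilon> ^ h i) else 0)"
  define Di :: "complex^'n^'n" where "Di = (\<chi> i j. if i = j then complex_of_real ((1/\<epsilon>) ^ h i) else 0)"
  have DDi: "D ** Di = Finite_Cartesian_Product.mat 1"
    unfolding D_def Di_def matrix_matrix_mult_def Finite_Cartesian_Product.mat_def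
    using e0 by (auto simp: Finite_Cartesian_Product.vec_eq_iff if_distrib[of "\<lambda>x. x * _"] sum.delta power_one_over
        cong: if_cong)
  define S where "S = P ** D"
  define Si where "Si = Di ** Q"
  have inv: "S *v (Si *v w) = w" for w
  proof -
    have "S ** Si = P ** (D ** Di) ** Q" unfolding S_def Si_def by (simp add: matrix_mul_assoc)
    also have "\<dots> = Finite_Cartesian_Product.mat 1" using DDi PQ by (simp add: matrix_mul_rid)
    finally show ?thesis by (simp add: matrix_vector_mul_assoc matrix_vector_mul_lid)
  qed
  have comp: "(Si *v (cmat M *v (S *v y))) $ i =
      (\<Sum>j\<in>UNIV. T$i$j * complex_of_real (\<epsilon> ^ h j / \<epsilon> ^ h i) * y$j)" for y i
  proof -
    have "Si ** cmat M ** S = Di ** (Q ** P) ** T ** (Q ** P) ** D"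
      unfolding Si_def S_def MT by (simp add: matrix_mul_assoc)
    also have "\<dots> = Di ** T ** D" using QP by (simp add: matrix_mul_rid matrix_mul_lid)
    finally have "Si ** cmat M ** S = Di ** T ** D" .
    then have e: "Si *v (cmat M *v (S *v y)) = (Di ** T ** D) *v y"
      by (metis matrix_vector_mul_assoc matrix_mul_assoc)
    show ?thesis unfolding e unfolding D_def Di_def matrix_matrix_mult_def matrix_vector_mult_def
      using e0 by (simp add: if_distrib[of "\<lambda>x. x * _"] if_distrib[of "\<lambda>x. _ * x"] if_distrib[of "\<lambda>x. x / _"] sum.delta
          sum.delta' power_one_over field_simps cong: if_cong)
  qed
  have trm: "inner (y$i) (T$i$j * complex_of_real (\<epsilon> ^ h j / \<epsilon> ^ h i) * y$j)
      \<le> (if i = j then - \<alpha>0 * (norm (y$i))^2 else 0) + \<epsilon> * norm (T$i$j) * (norm y)^2" for y i j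
  proof (cases "i = j")
    case True
    then have "inner (y$i) (T$i$j * complex_of_real (\<epsilon> ^ h j / \<epsilon> ^ h i) * y$j)
        = Re (T$i$i) * (norm (y$i))^2" using e0 by (simp add: inner_complex_mult_self)
    also have "\<dots> \<le> - \<alpha>0 * (norm (y$i))^2" using a0le[of i] by (intro mult_right_mono) auto
    finally have "inner (y$i) (T$i$j * complex_of_real (\<epsilon> ^ h j / \<epsilon> ^ h i) * y$j)
        \<le> - \<alpha>0 * (norm (y$i))^2" .
    moreover have "0 \<le> \<epsilon> * norm (T$i$j) * (norm y)^2" using e0 by simp
    ultimately show ?thesis using True by simp
  next
    case False
    show ?thesis
    proof (cases "h j < h i")
      case True then show ?thesis using False ut[OF True] e0 by simp
    next
      case hlt: False
      with False inj have hlt': "h i < h j" by (metis inj_eq linorder_neqE_nat)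
      have f: "\<epsilon> ^ h j / \<epsilon> ^ h i = \<epsilon> ^ (h j - h i)" using e0 hlt' by (simp add: power_diff)
      have f0: "\<epsilon> ^ (h j - h i) \<le> \<epsilon>"
        using power_decreasing[of 1 "h j - h i" \<epsilon>] e0 e1 hlt' by simp
      have "inner (y$i) (T$i$j * complex_of_real (\<epsilon> ^ h j / \<epsilon> ^ h i) * y$j)
          \<le> norm (y$i) * norm (T$i$j * complex_of_real (\<epsilon> ^ h j / \<epsilon> ^ h i) * y$j)"
        by (rule inner_complex_bound)
      also have "\<dots> = norm (y$i) * (norm (T$i$j) * \<epsilon> ^ (h j - h i) * norm (y$j))"
        unfolding f using e0 by (simp add: norm_mult norm_power)
      also have "\<dots> \<le> norm y * (norm (T$i$j) * \<epsilon> * norm y)"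
        using e0 Finite_Cartesian_Product.norm_nth_le[of y i] Finite_Cartesian_Product.norm_nth_le[of y j] by (intro mult_mono f0 mult_nonneg_nonneg) auto
      finally show ?thesis using False by (simp add: power2_eq_square algebra_simps)
    qed
  qed
  have main: "inner y (Si *v (cmat M *v (S *v y))) \<le> - (\<alpha>0/2) * (norm y)^2" for y
  proof -
    have "inner y (Si *v (cmat M *v (S *v y))) =
      (\<Sum>i\<in>UNIV. \<Sum>j\<in>UNIV. inner (y$i) (T$i$j * complex_of_real (\<epsilon> ^ h j / \<epsilon> ^ h i) * y$j))"
      unfolding inner_vec_def comp by (simp add: inner_sum_right)
    also have "\<dots> \<le> (\<Sum>i\<in>UNIV. \<Sum>j\<in>UNIV. (if i = j then - \<alpha>0 * (norm (y$i))^2 else 0)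
        + \<epsilon> * norm (T$i$j) * (norm y)^2)"
      by (intro sum_mono trm)
    also have "\<dots> = - \<alpha>0 * (\<Sum>i\<in>UNIV. (norm (y$i))^2) + \<epsilon> * C * (norm y)^2"
      unfolding C_def sum.distrib sum_distrib_left sum_distrib_right
      by (simp add: if_distrib cong: if_cong)
    also have "(\<Sum>i\<in>UNIV. (norm (y$i))^2) = (norm y)^2"
      by (simp add: power2_norm_eq_inner inner_vec_def)
    also have "- \<alpha>0 * (norm y)^2 + \<epsilon> * C * (norm y)^2 \<le> - (\<alpha>0/2) * (norm y)^2"
      using mult_right_mono[OF eC, of "(norm y)^2"] by (simp add: algebra_simps)
    finally show ?thesis .
  qed
  show ?thesis using inv main a0 by (intro exI[of _ S] exI[of _ Si] exI[of _ "\<alpha>0/2"]) auto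
qed

definition cvec :: "real^'n \<Rightarrow> complex^'n" where
  "cvec x = (\<chi> i. complex_of_real (x$i))"

lemma cvec_add: "cvec (x + y) = cvec x + cvec y"
  by (simp add: cvec_def Finite_Cartesian_Product.vec_eq_iff)

lemma cvec_scaleR: "cvec (r *\<^sub>R x) = r *\<^sub>R cvec x"
  by (simp add: cvec_def Finite_Cartesian_Product.vec_eq_iff scaleR_conv_of_real[where 'a=complex])

lemma norm_cvec: "norm (cvec x) = norm (x::real^'n::finite)"
  by (simp add: cvec_def norm_vec_def)

lemma cmat_cvec: "cmat M *v cvec x = cvec (M *v x)"
  by (simp add: cmat_def cvec_def matrix_vector_mult_def Finite_Cartesian_Product.vec_eq_iff)

lemma mvec_scaleR: "(A::complex^'n::finite^'m) *v (r *\<^sub>R y) = r *\<^sub>R (A *v y)"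
  by (simp add: matrix_vector_mult_def Finite_Cartesian_Product.vec_eq_iff scaleR_conv_of_real[where 'a=complex] sum_distrib_left algebra_simps)

lemma rmat_scaleR: "((N::real^'n::finite^'n) + g *\<^sub>R M) *v x = N *v x + g *\<^sub>R (M *v x)"
  by (simp add: matrix_vector_mult_add_rdistrib scaleR_matrix_vector_assoc)

definition mb :: "complex^'n^'m \<Rightarrow> real" where
  "mb A = (\<Sum>i\<in>UNIV. \<Sum>j\<in>UNIV. norm (A$i$j))"

lemma mb_nonneg: "mb A \<ge> 0"
  unfolding mb_def by (intro sum_nonneg) auto

lemma mb_bound: "norm ((A::complex^'n::finite^'m::finite) *v y) \<le> mb A * norm y"
proof -
  have "norm (A *v y) \<le> (\<Sum>i\<in>UNIV. norm ((A *v y)$i))"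
    unfolding norm_vec_def by (rule L2_set_le_sum) auto
  also have "\<dots> \<le> (\<Sum>i\<in>UNIV. (\<Sum>j\<in>UNIV. norm (A$i$j)) * norm y)"
  proof (rule sum_mono)
    fix i
    have "norm ((A *v y)$i) = norm (\<Sum>j\<in>UNIV. A$i$j * y$j)"
      by (simp add: matrix_vector_mult_def)
    also have "\<dots> \<le> (\<Sum>j\<in>UNIV. norm (A$i$j * y$j))" by (rule norm_sum)
    also have "\<dots> \<le> (\<Sum>j\<in>UNIV. norm (A$i$j) * norm y)"
      by (intro sum_mono) (auto simp: norm_mult intro!: mult_left_mono Finite_Cartesian_Product.norm_nth_le)
    finally show "norm ((A *v y)$i) \<le> (\<Sum>j\<in>UNIV. norm (A$i$j)) * norm y"
      by (simp add: sum_distrib_right)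
  qed
  also have "\<dots> = mb A * norm y" unfolding mb_def by (simp add: sum_distrib_right)
  finally show ?thesis .
qed

lemma mode_lyap:
  fixes M N :: "real^'n::finite^'n"
  assumes "hurwitz M"
  shows "\<exists>L::real^'n \<Rightarrow> complex^'n. bounded_linear L \<and> (\<exists>b K \<alpha>. b \<ge> 1 \<and> K \<ge> 0 \<and> \<alpha> > 0 \<and>
     (\<forall>x. norm x \<le> norm (L x) \<and> (norm (L x))^2 \<le> b * (norm x)^2) \<and>
     (\<forall>x g. g \<ge> 0 \<longrightarrow> inner (L x) (L ((N + g *\<^sub>R M) *v x)) \<le> (K - g * \<alpha>) * (norm (L x))^2))"
proof -
  obtain S Si :: "complex^'n^'n" and \<alpha> where a: "\<alpha> > 0" and inv: "\<And>w. S *v (Si *v w) = w"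
    and neg: "\<And>y. inner y (Si *v (cmat M *v (S *v y))) \<le> - \<alpha> * (norm y)^2"
    using hurwitz_lyap[OF assms] by blast
  define s where "s = mb S + 1"
  have s0: "s > 0" unfolding s_def using mb_nonneg[of S] by linarith
  define L where "L x = s *\<^sub>R (Si *v cvec x)" for x
  have Lb: "norm (L x) \<le> norm x * (s * mb Si)" for x
  proof -
    have "norm (L x) = s * norm (Si *v cvec x)" unfolding L_def using s0 by simp
    also have "\<dots> \<le> s * (mb Si * norm x)"
      using mb_bound[of Si "cvec x"] s0 by (simp add: norm_cvec)
    finally show ?thesis by (simp add: algebra_simps)
  qed
  have bl: "bounded_linear L"
    by (rule bounded_linear_intro[OF _ _ Lb])
       (simp_all add: L_def cvec_add cvec_scaleR matrix_vector_right_distrib mvec_scaleR scaleR_add_right)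
  have low: "norm x \<le> norm (L x)" for x
  proof -
    have "norm x = norm (S *v (Si *v cvec x))" by (simp add: inv norm_cvec)
    also have "\<dots> \<le> mb S * norm (Si *v cvec x)" by (rule mb_bound)
    also have "\<dots> \<le> s * norm (Si *v cvec x)" unfolding s_def by (simp add: algebra_simps)
    also have "\<dots> = norm (L x)" unfolding L_def using s0 by simp
    finally show ?thesis .
  qed
  define b where "b = (max 1 (s * mb Si))^2"
  have up: "(norm (L x))^2 \<le> b * (norm x)^2" for x
  proof -
    have "norm (L x) \<le> max 1 (s * mb Si) * norm x"
      using Lb[of x] by (smt (verit) mult.commute mult_right_mono norm_ge_zero)
    then have "(norm (L x))^2 \<le> (max 1 (s * mb Si) * norm x)^2"
      by (intro power_mono) auto
    then show ?thesis unfolding b_def by (simp add: power_mult_distrib)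
  qed
  have b1: "b \<ge> 1" unfolding b_def by simp
  define K where "K = mb Si * mb (cmat N) * mb S"
  have K0: "K \<ge> 0" unfolding K_def by (intro mult_nonneg_nonneg mb_nonneg)
  have key: "inner (L x) (L ((N + g *\<^sub>R M) *v x)) \<le> (K - g * \<alpha>) * (norm (L x))^2"
    if g: "g \<ge> 0" for x g
  proof -
    define y where "y = Si *v cvec x"
    have cy: "cvec x = S *v y" unfolding y_def by (simp add: inv)
    have e1: "L ((N + g *\<^sub>R M) *v x) = s *\<^sub>R (Si *v (cmat N *v (S *v y)) + g *\<^sub>R (Si *v (cmat M *v (S *v y))))"
      unfolding L_def rmat_scaleR cvec_add cvec_scaleR matrix_vector_right_distrib mvec_scaleR
      by (simp add: cmat_cvec[symmetric] cy)
    have e2: "L x = s *\<^sub>R y" unfolding L_def y_def ..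
    have i1: "inner y (Si *v (cmat N *v (S *v y))) \<le> K * (norm y)^2"
    proof -
      have "inner y (Si *v (cmat N *v (S *v y))) \<le> norm y * norm (Si *v (cmat N *v (S *v y)))"
        by (rule norm_cauchy_schwarz)
      also have "\<dots> \<le> norm y * (mb Si * (mb (cmat N) * (mb S * norm y)))"
        by (intro mult_left_mono order.trans[OF mb_bound] mult_left_mono[OF order.trans[OF mb_bound]]
            mb_nonneg mult_left_mono[OF mb_bound]) auto
      finally show ?thesis unfolding K_def by (simp add: power2_eq_square algebra_simps)
    qed
    have i2: "g * inner y (Si *v (cmat M *v (S *v y))) \<le> g * (- \<alpha> * (norm y)^2)"
      using mult_left_mono[OF neg[of y] g] .
    have "inner (L x) (L ((N + g *\<^sub>R M) *v x)) =
        s^2 * (inner y (Si *v (cmat N *v (S *v y))) + g * inner y (Si *v (cmat M *v (S *v y))))"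
      unfolding e1 e2 by (simp add: inner_add_right power2_eq_square algebra_simps)
    also have "\<dots> \<le> s^2 * (K * (norm y)^2 + g * (- \<alpha> * (norm y)^2))"
      using i1 i2 by (intro mult_left_mono) auto
    also have "\<dots> = (K - g * \<alpha>) * (norm (L x))^2"
      unfolding e2 using s0 by (simp add: power_mult_distrib algebra_simps)
    finally show ?thesis .
  qed
  show ?thesis
    using bl b1 K0 a low up key by blast
qed

lemma decay_interval:
  fixes x :: "real \<Rightarrow> real^'n::finite" and L :: "real^'n \<Rightarrow> 'b::real_inner" and A :: "real^'n^'n"
  assumes st: "s \<le> t" and cont: "continuous_on {s..t} x"
    and der: "\<And>u. s < u \<Longrightarrow> u < t \<Longrightarrow> (x has_vector_derivative (A *v x u)) (at u)"
    and L: "bounded_linear L"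
    and neg: "\<And>z. inner (L z) (L (A *v z)) \<le> - r * (norm (L z))^2"
  shows "(norm (L (x t)))^2 \<le> exp (- 2 * r * (t - s)) * (norm (L (x s)))^2"
proof -
  define f where "f u = exp (2*r*u) * inner (L (x u)) (L (x u))" for u
  have "f t \<le> f s"
  proof (rule DERIV_nonpos_imp_decreasing_open[OF st])
    fix u assume u: "s < u" "u < t"
    have d1: "((\<lambda>u. L (x u)) has_vector_derivative L (A *v x u)) (at u)"
      using bounded_linear.has_vector_derivative[OF L der[OF u]] .
    have d2: "((\<lambda>u. inner (L (x u)) (L (x u))) has_vector_derivative
        (inner (L (x u)) (L (A *v x u)) + inner (L (A *v x u)) (L (x u)))) (at u)"
      using bounded_bilinear.has_vector_derivative[OF bounded_bilinear_inner d1 d1] .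
    then have d3: "((\<lambda>u. inner (L (x u)) (L (x u))) has_real_derivative
        2 * inner (L (x u)) (L (A *v x u))) (at u)"
      by (simp add: has_real_derivative_iff_has_vector_derivative inner_commute)
    have d4: "((\<lambda>u. exp (2*r*u)) has_real_derivative exp (2*r*u) * (2*r)) (at u)"
      by (rule derivative_eq_intros refl | simp)+
    have d: "(f has_real_derivative (exp (2*r*u) * (2*r)) * inner (L (x u)) (L (x u)) +
        (2 * inner (L (x u)) (L (A *v x u))) * exp (2*r*u)) (at u)"
      unfolding f_def[abs_def] by (rule DERIV_mult[OF d4 d3])
    have "exp (2*r*u) * (2*r * (norm (L (x u)))^2 + 2 * inner (L (x u)) (L (A *v x u))) \<le> 0"
      using neg[of "x u"] by (intro mult_nonneg_nonpos) auto
    then have "(exp (2*r*u) * (2*r)) * inner (L (x u)) (L (x u)) +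
        (2 * inner (L (x u)) (L (A *v x u))) * exp (2*r*u) \<le> 0"
      by (simp add: power2_norm_eq_inner algebra_simps)
    then show "\<exists>y. DERIV f u :> y \<and> y \<le> 0" using d by blast
  next
    have cL: "continuous_on {s..t} (\<lambda>u. L (x u))"
      using bounded_linear.continuous_on[OF L cont] .
    show "continuous_on {s..t} f" unfolding f_def
      by (intro continuous_intros cL)
  qed
  then have "exp (2*r*t) * (norm (L (x t)))^2 \<le> exp (2*r * s) * (norm (L (x s)))^2"
    unfolding f_def by (simp add: power2_norm_eq_inner)
  then have A: "exp (- 2*r*t) * (exp (2*r*t) * (norm (L (x t)))^2) \<le>
      exp (- 2*r*t) * (exp (2*r * s) * (norm (L (x s)))^2)"
    by (rule mult_left_mono) simp
  have B: "exp (- 2*r*t) * (exp (2*r*t) * (norm (L (x t)))^2) = (norm (L (x t)))^2"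
    by (simp add: mult.assoc[symmetric] exp_add[symmetric])
  have C: "exp (- 2*r*t) * (exp (2*r * s) * (norm (L (x s)))^2) = exp (- 2 * r * (t - s)) * (norm (L (x s)))^2"
    by (simp add: mult.assoc[symmetric] exp_add[symmetric] right_diff_distrib)
  from A show ?thesis unfolding B C .
qed

lemma nat_dist1: "(a::nat) \<noteq> b \<Longrightarrow> 1 \<le> norm (real a - real b)"
  by (cases "a < b") auto

theorem lemma4:
  fixes p :: nat and M :: "nat \<Rightarrow> real^'n^'n" and N :: "real^'n^'n"
    and \<tau>D N0 lam :: real
  assumes "\<forall>i\<in>{1..p}. hurwitz (M i)"
    and "\<tau>D > 0" and "N0 > 0" and "lam > 0"
  shows "\<exists>g0>0. \<forall>g\<ge>g0. \<exists>c>0. \<forall>\<sigma>\<in>S_ave {1..p} \<tau>D N0. \<forall>x.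
           switched_solution (\<lambda>i. N + g *\<^sub>R M i) \<sigma> x \<longrightarrow>
           (\<forall>t\<ge>0. norm (x t) \<le> c * exp (- lam * t) * norm (x 0))"
proof -
  define P where "P = {1..p}"
  have fP: "finite P" unfolding P_def by simp
  have H0: "\<forall>i\<in>P. \<exists>(L::real^'n \<Rightarrow> complex^'n) b K \<alpha>. bounded_linear L \<and> b \<ge> 1 \<and> K \<ge> 0 \<and> \<alpha> > 0 \<and>
     (\<forall>x. norm x \<le> norm (L x) \<and> (norm (L x))^2 \<le> b * (norm x)^2) \<and>
     (\<forall>x g. g \<ge> 0 \<longrightarrow> inner (L x) (L ((N + g *\<^sub>R M i) *v x)) \<le> (K - g * \<alpha>) * (norm (L x))^2)"
    using mode_lyap assms(1) unfolding P_def by blast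
  obtain Lf :: "nat \<Rightarrow> real^'n \<Rightarrow> complex^'n" where H1: "\<forall>i\<in>P. \<exists>b K \<alpha>. bounded_linear (Lf i) \<and> b \<ge> 1 \<and> K \<ge> 0 \<and> \<alpha> > 0 \<and>
     (\<forall>x. norm x \<le> norm (Lf i x) \<and> (norm (Lf i x))^2 \<le> b * (norm x)^2) \<and>
     (\<forall>x g. g \<ge> 0 \<longrightarrow> inner (Lf i x) (Lf i ((N + g *\<^sub>R M i) *v x)) \<le> (K - g * \<alpha>) * (norm (Lf i x))^2)"
    using bchoice[OF H0] by blast
  obtain bf where H2: "\<forall>i\<in>P. \<exists>K \<alpha>. bounded_linear (Lf i) \<and> bf i \<ge> 1 \<and> K \<ge> 0 \<and> \<alpha> > 0 \<and>
     (\<forall>x. norm x \<le> norm (Lf i x) \<and> (norm (Lf i x))^2 \<le> bf i * (norm x)^2) \<and>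
     (\<forall>x g. g \<ge> 0 \<longrightarrow> inner (Lf i x) (Lf i ((N + g *\<^sub>R M i) *v x)) \<le> (K - g * \<alpha>) * (norm (Lf i x))^2)"
    using bchoice[OF H1] by blast
  obtain Kf where H3: "\<forall>i\<in>P. \<exists>\<alpha>. bounded_linear (Lf i) \<and> bf i \<ge> 1 \<and> Kf i \<ge> 0 \<and> \<alpha> > 0 \<and>
     (\<forall>x. norm x \<le> norm (Lf i x) \<and> (norm (Lf i x))^2 \<le> bf i * (norm x)^2) \<and>
     (\<forall>x g. g \<ge> 0 \<longrightarrow> inner (Lf i x) (Lf i ((N + g *\<^sub>R M i) *v x)) \<le> (Kf i - g * \<alpha>) * (norm (Lf i x))^2)"
    using bchoice[OF H2] by blast
  obtain af where H: "\<forall>i\<in>P. bounded_linear (Lf i) \<and> bf i \<ge> 1 \<and> Kf i \<ge> 0 \<and> af i > 0 \<and>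
     (\<forall>x. norm x \<le> norm (Lf i x) \<and> (norm (Lf i x))^2 \<le> bf i * (norm x)^2) \<and>
     (\<forall>x g. g \<ge> 0 \<longrightarrow> inner (Lf i x) (Lf i ((N + g *\<^sub>R M i) *v x)) \<le> (Kf i - g * af i) * (norm (Lf i x))^2)"
    using bchoice[OF H3] by blast
  define B where "B = Max (insert 1 (bf ` P))"
  define Km where "Km = Max (insert 0 (Kf ` P))"
  define \<alpha> where "\<alpha> = Min (insert 1 (af ` P))"
  have B1: "B \<ge> 1" unfolding B_def using fP by simp
  have Bi: "bf i \<le> B" if "i \<in> P" for i unfolding B_def using fP that by simp
  have Km0: "Km \<ge> 0" unfolding Km_def using fP by simp
  have Ki: "Kf i \<le> Km" if "i \<in> P" for i unfolding Km_def using fP that by simp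
  have a0: "\<alpha> > 0" unfolding \<alpha>_def using fP H by (simp add: Min_gr_iff)
  have ai: "\<alpha> \<le> af i" if "i \<in> P" for i unfolding \<alpha>_def using fP that by simp
  define lB where "lB = ln B"
  have lB0: "lB \<ge> 0" unfolding lB_def using B1 by simp
  have BlB: "B = exp lB" unfolding lB_def using B1 by simp
  define g0 where "g0 = (Km + lam + lB / (2 * \<tau>D)) / \<alpha>"
  have "lB / (2 * \<tau>D) \<ge> 0" using lB0 assms(2) by simp
  then have g00: "g0 > 0" unfolding g0_def using Km0 assms(4) a0 by (intro divide_pos_pos) linarith+
  show ?thesis
  proof (rule exI[of _ g0], intro conjI g00 allI impI)
    fix g assume gg: "g \<ge> g0"
    have g0': "g \<ge> 0" using gg g00 by simp
    define r where "r = g * \<alpha> - Km"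
    have rge: "r \<ge> lam + lB / (2 * \<tau>D)"
    proof -
      have "g0 * \<alpha> \<le> g * \<alpha>" using gg a0 by (simp add: mult_right_mono)
      moreover have "g0 * \<alpha> = Km + lam + lB / (2 * \<tau>D)" unfolding g0_def using a0 by simp
      ultimately show ?thesis unfolding r_def by (simp add: mult.commute)
    qed
    define c where "c = exp ((1 + N0) * lB / 2)"
    show "\<exists>c>0. \<forall>\<sigma>\<in>S_ave {1..p} \<tau>D N0. \<forall>x.
           switched_solution (\<lambda>i. N + g *\<^sub>R M i) \<sigma> x \<longrightarrow>
           (\<forall>t\<ge>0. norm (x t) \<le> c * exp (- lam * t) * norm (x 0))"
    proof (intro exI[of _ c] conjI ballI allI impI)
      show "c > 0" unfolding c_def by simp
      fix \<sigma> x and t :: real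
      assume \<sigma>: "\<sigma> \<in> S_ave {1..p} \<tau>D N0" and sol: "switched_solution (\<lambda>i. N + g *\<^sub>R M i) \<sigma> x"
        and t0: "0 \<le> t"
      from \<sigma> have inP: "\<And>t. t \<ge> 0 \<Longrightarrow> \<sigma> t \<in> P" and fin: "\<And>T. finite (disc_pts \<sigma> \<inter> {0..T})"
        and avg: "\<And>t0 t. 0 \<le> t0 \<Longrightarrow> t0 \<le> t \<Longrightarrow> real (N_sigma \<sigma> t0 t) \<le> N0 + (t - t0) / \<tau>D"
        unfolding S_ave_def switching_signal_def P_def by auto
      from sol have xc: "continuous_on {0..} x"
        and xd: "\<And>t. 0 \<le> t \<Longrightarrow> t \<notin> disc_pts \<sigma> \<Longrightarrow>
            (x has_vector_derivative ((N + g *\<^sub>R M (\<sigma> t)) *v x t)) (at t within {0..})"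
        unfolding switched_solution_def by auto
      have interval: "(norm (x t))^2 \<le> B * exp (- 2 * r * (t - s)) * (norm (x s))^2"
        if s0: "0 \<le> s" and st: "s \<le> t" and nd: "disc_pts \<sigma> \<inter> {s<..<t} = {}" for s t
      proof (cases "s = t")
        case True
        then show ?thesis using mult_right_mono[OF B1, of "(norm (x t))^2"] by simp
      next
        case False
        with st have st': "s < t" by simp
        have ncont: "isCont \<sigma> u" if "s < u" "u < t" for u
        proof -
          have "u \<notin> disc_pts \<sigma>" using nd that by auto
          then have "continuous (at u within {0..}) \<sigma>" using that s0 unfolding disc_pts_def by auto
          moreover have "at u within {0..} = at u"
            by (rule at_within_interior) (use that s0 in simp)
          ultimately show ?thesis by simp
        qed
        have "continuous_on {s<..<t} \<sigma>"
          by (rule continuous_at_imp_continuous_on) (use ncont in auto)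
        then have cr: "continuous_on {s<..<t} (\<lambda>u. real (\<sigma> u))"
          by (rule continuous_on_of_nat)
        have "(\<lambda>u. real (\<sigma> u)) constant_on {s<..<t}"
        proof (rule continuous_discrete_range_constant[OF connected_Ioo cr])
          fix u assume "u \<in> {s<..<t}"
          show "\<exists>e>0. \<forall>y. y \<in> {s<..<t} \<and> real (\<sigma> y) \<noteq> real (\<sigma> u) \<longrightarrow>
              e \<le> norm (real (\<sigma> y) - real (\<sigma> u))"
            by (intro exI[of _ 1]) (auto intro: nat_dist1)
        qed
        then obtain a where a: "\<And>u. u \<in> {s<..<t} \<Longrightarrow> real (\<sigma> u) = a"
          unfolding constant_on_def by blast
        define i where "i = \<sigma> ((s + t) / 2)"
        have si: "\<sigma> u = i" if "s < u" "u < t" for u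
          using a[of u] a[of "(s+t)/2"] that st' unfolding i_def by simp
        have iP: "i \<in> P" unfolding i_def using inP s0 st' by simp
        have Hi: "bounded_linear (Lf i)" "\<And>x. norm x \<le> norm (Lf i x)"
            "\<And>x. (norm (Lf i x))^2 \<le> bf i * (norm x)^2"
            "\<And>x. inner (Lf i x) (Lf i ((N + g *\<^sub>R M i) *v x)) \<le> (Kf i - g * af i) * (norm (Lf i x))^2"
          using H iP g0' by auto
        have negi: "inner (Lf i z) (Lf i ((N + g *\<^sub>R M i) *v z)) \<le> - r * (norm (Lf i z))^2" for z
        proof -
          have "g * \<alpha> \<le> g * af i" using ai[OF iP] g0' by (rule mult_left_mono)
          then have "Kf i - g * af i \<le> - r" unfolding r_def using Ki[OF iP] by linarith
          then have "(Kf i - g * af i) * (norm (Lf i z))^2 \<le> - r * (norm (Lf i z))^2"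
            by (rule mult_right_mono) simp
          then show ?thesis using Hi(4)[of z] by linarith
        qed
        have dec: "(norm (Lf i (x t)))^2 \<le> exp (- 2 * r * (t - s)) * (norm (Lf i (x s)))^2"
        proof (rule decay_interval[OF st _ _ Hi(1) negi])
          show "continuous_on {s..t} x" using xc by (rule continuous_on_subset) (use s0 in auto)
          fix u assume u: "s < u" "u < t"
          have "u \<notin> disc_pts \<sigma>" using nd u by auto
          then have "(x has_vector_derivative ((N + g *\<^sub>R M (\<sigma> u)) *v x u)) (at u within {0..})"
            using xd u s0 by auto
          moreover have "at u within {0..} = at u"
            by (rule at_within_interior) (use u s0 in simp)
          ultimately show "(x has_vector_derivative ((N + g *\<^sub>R M i) *v x u)) (at u)"
            using si[OF u] by simp
        qed
        have "(norm (x t))^2 \<le> (norm (Lf i (x t)))^2" using Hi(2)[of "x t"] by (simp add: power_mono)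
        also have "\<dots> \<le> exp (- 2 * r * (t - s)) * (norm (Lf i (x s)))^2" by (rule dec)
        also have "\<dots> \<le> exp (- 2 * r * (t - s)) * (B * (norm (x s))^2)"
        proof (rule mult_left_mono)
          have "bf i * (norm (x s))^2 \<le> B * (norm (x s))^2" using Bi[OF iP] by (rule mult_right_mono) simp
          then show "(norm (Lf i (x s)))^2 \<le> B * (norm (x s))^2" using Hi(3)[of "x s"] by linarith
        qed simp
        finally show ?thesis by (simp add: algebra_simps)
      qed
      have ind: "(norm (x t))^2 \<le> B ^ Suc n * exp (- 2 * r * t) * (norm (x 0))^2"
        if "0 \<le> t" "card (disc_pts \<sigma> \<inter> {0<..<t}) = n" for n t
        using that
      proof (induction n arbitrary: t)
        case 0
        have "finite (disc_pts \<sigma> \<inter> {0<..<t})"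
          using fin[of t] by (rule finite_subset[rotated]) auto
        then have "disc_pts \<sigma> \<inter> {0<..<t} = {}" using 0 by simp
        then show ?case using interval[of 0 t] 0 by simp
      next
        case (Suc n)
        define D where "D = disc_pts \<sigma> \<inter> {0<..<t}"
        have fD: "finite D" unfolding D_def using fin[of t] by (rule finite_subset[rotated]) auto
        have neD: "D \<noteq> {}" using Suc.prems unfolding D_def by auto
        define s where "s = Max D"
        have sD: "s \<in> D" unfolding s_def using fD neD by simp
        then have s0: "0 < s" "s < t" and sdisc: "s \<in> disc_pts \<sigma>" unfolding D_def by auto
        have nd: "disc_pts \<sigma> \<inter> {s<..<t} = {}"
        proof (rule ccontr)
          assume "disc_pts \<sigma> \<inter> {s<..<t} \<noteq> {}"
          then obtain u where "u \<in> disc_pts \<sigma>" "s < u" "u < t" by auto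
          then have "u \<in> D" unfolding D_def using s0 by auto
          then have "u \<le> s" unfolding s_def using fD by simp
          then show False using \<open>s < u\<close> by simp
        qed
        have Dsplit: "D = insert s (disc_pts \<sigma> \<inter> {0<..<s})"
        proof
          show "D \<subseteq> insert s (disc_pts \<sigma> \<inter> {0<..<s})"
          proof
            fix u assume u: "u \<in> D"
            then have "u \<le> s" unfolding s_def using fD by simp
            then show "u \<in> insert s (disc_pts \<sigma> \<inter> {0<..<s})" using u unfolding D_def by auto
          qed
          show "insert s (disc_pts \<sigma> \<inter> {0<..<s}) \<subseteq> D" using sD s0 unfolding D_def by auto
        qed
        have fs: "finite (disc_pts \<sigma> \<inter> {0<..<s})" using fD Dsplit by (metis finite_insert)
        have "card D = Suc (card (disc_pts \<sigma> \<inter> {0<..<s}))"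
          unfolding Dsplit using fs by (subst card_insert_disjoint) auto
        then have cs: "card (disc_pts \<sigma> \<inter> {0<..<s}) = n" using Suc.prems unfolding D_def by simp
        have IH: "(norm (x s))^2 \<le> B ^ Suc n * exp (- 2 * r * s) * (norm (x 0))^2"
          using Suc.IH[of s] s0 cs by simp
        have "(norm (x t))^2 \<le> B * exp (- 2 * r * (t - s)) * (norm (x s))^2"
          using interval[of s t] s0 nd by simp
        also have "\<dots> \<le> B * exp (- 2 * r * (t - s)) * (B ^ Suc n * exp (- 2 * r * s) * (norm (x 0))^2)"
          using IH B1 by (intro mult_left_mono) auto
        also have "\<dots> = B ^ Suc (Suc n) * (exp (- 2 * r * (t - s)) * exp (- 2 * r * s)) * (norm (x 0))^2"
          by (simp add: algebra_simps)
        also have "exp (- 2 * r * (t - s)) * exp (- 2 * r * s) = exp (- 2 * r * t)"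
          by (simp add: exp_add[symmetric] algebra_simps)
        finally show ?case .
      qed
      define k where "k = card (disc_pts \<sigma> \<inter> {0<..<t})"
      have kb: "real k \<le> N0 + t / \<tau>D" using avg[of 0 t] t0 unfolding k_def N_sigma_def by simp
      have "(norm (x t))^2 \<le> B ^ Suc k * exp (- 2 * r * t) * (norm (x 0))^2"
        using ind[OF t0] k_def by simp
      also have "B ^ Suc k * exp (- 2 * r * t) = exp (real (Suc k) * lB - 2 * r * t)"
        unfolding BlB by (simp add: exp_of_nat_mult[symmetric] exp_diff exp_minus exp_add field_simps)
      also have "exp (real (Suc k) * lB - 2 * r * t) \<le> exp ((1 + N0) * lB - 2 * lam * t)"
      proof -
        have "real (Suc k) * lB \<le> (1 + N0 + t / \<tau>D) * lB" using kb lB0 by (intro mult_right_mono) auto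
        moreover have "2 * (lam + lB / (2 * \<tau>D)) * t \<le> 2 * r * t" using rge t0 by (intro mult_right_mono) auto
        moreover have "(1 + N0 + t / \<tau>D) * lB = (1 + N0) * lB + lB * t / \<tau>D"
          by (simp add: algebra_simps)
        moreover have "2 * (lam + lB / (2 * \<tau>D)) * t = 2 * lam * t + lB * t / \<tau>D"
          using assms(2) by (simp add: field_simps)
        ultimately have "real (Suc k) * lB - 2 * r * t \<le> (1 + N0) * lB - 2 * lam * t" by linarith
        then show ?thesis by simp
      qed
      also have "exp ((1 + N0) * lB - 2 * lam * t) = (c * exp (- lam * t))^2"
        unfolding c_def by (simp add: power2_eq_square exp_add[symmetric] field_simps)
      finally have "(norm (x t))^2 \<le> (c * exp (- lam * t) * norm (x 0))^2"
        by (simp add: power_mult_distrib mult_right_mono)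
      then show "norm (x t) \<le> c * exp (- lam * t) * norm (x 0)"
        by (rule power2_le_imp_le) (simp add: c_def)
    qed
  qed
qed


end
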